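(* Let $P$ be a finite poset whose Hasse diagram is a rooted tree. (1) If the root is the greatest element of $P$, then the basic elements of $P$ are exactly the leaves (the minimal elements). (2) If the root is the least element of $P$, then the basic elements of $P$ are exactly the minimal elements of the induced subposet $P_1=\{x\in P:\ \text{there is exactly one leaf } \ell \text{ with } x\le \ell\}$.
   Context: Such a poset is a $\mathcal{V}$-poset. An element $x$ of a $\mathcal{V}$-poset is basic if: (B.1) there are no two incomparable elements $u,v$ with $x>u$ and $x>v$; (B.2) there are no two incomparable elements $u,v$ with $x<u$ and $x<v$; (B.3) there is no element $u$ with $u<x$ such that for all $w\neq u,x$ one has ($u\ge w\iff x\ge w$) and ($u\le w\iff x\le w$). The leaves of the rooted tree are its vertices with no children (the vertices of degree one other than the root, or the root itself if $P$ has one element). *)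

theory Defs
  imports Main
begin

definition poset_on :: "'a set \<Rightarrow> ('a \<Rightarrow> 'a \<Rightarrow> bool) \<Rightarrow> bool" where
  "poset_on P le \<longleftrightarrow>
     (\<forall>x\<in>P. le x x) \<and>
     (\<forall>x\<in>P. \<forall>y\<in>P. le x y \<and> le y x \<longrightarrow> x = y) \<and>
     (\<forall>x\<in>P. \<forall>y\<in>P. \<forall>z\<in>P. le x y \<and> le y z \<longrightarrow> le x z)"

definition lt :: "('a \<Rightarrow> 'a \<Rightarrow> bool) \<Rightarrow> 'a \<Rightarrow> 'a \<Rightarrow> bool" where
  "lt le x y \<longleftrightarrow> le x y \<and> x \<noteq> y"

definition incomparable :: "('a \<Rightarrow> 'a \<Rightarrow> bool) \<Rightarrow> 'a \<Rightarrow> 'a \<Rightarrow> bool" where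
  "incomparable le u v \<longleftrightarrow> \<not> le u v \<and> \<not> le v u"

definition covers :: "'a set \<Rightarrow> ('a \<Rightarrow> 'a \<Rightarrow> bool) \<Rightarrow> 'a \<Rightarrow> 'a \<Rightarrow> bool" where
  "covers P le x y \<longleftrightarrow> x \<in> P \<and> y \<in> P \<and> lt le x y \<and> \<not> (\<exists>z\<in>P. lt le x z \<and> lt le z y)"

definition hasse_adj :: "'a set \<Rightarrow> ('a \<Rightarrow> 'a \<Rightarrow> bool) \<Rightarrow> 'a \<Rightarrow> 'a \<Rightarrow> bool" where
  "hasse_adj P le x y \<longleftrightarrow> covers P le x y \<or> covers P le y x"

definition graph_connected :: "'a set \<Rightarrow> ('a \<Rightarrow> 'a \<Rightarrow> bool) \<Rightarrow> bool" where
  "graph_connected V adj \<longleftrightarrow>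
     (\<forall>x\<in>V. \<forall>y\<in>V. (\<lambda>a b. a \<in> V \<and> b \<in> V \<and> adj a b)\<^sup>*\<^sup>* x y)"

definition has_cycle :: "'a set \<Rightarrow> ('a \<Rightarrow> 'a \<Rightarrow> bool) \<Rightarrow> bool" where
  "has_cycle V adj \<longleftrightarrow>
     (\<exists>cs. length cs \<ge> 3 \<and> distinct cs \<and> set cs \<subseteq> V \<and>
        (\<forall>i < length cs. adj (cs ! i) (cs ! ((i + 1) mod length cs))))"

definition is_tree :: "'a set \<Rightarrow> ('a \<Rightarrow> 'a \<Rightarrow> bool) \<Rightarrow> bool" where
  "is_tree V adj \<longleftrightarrow> V \<noteq> {} \<and> graph_connected V adj \<and> \<not> has_cycle V adj"

definition degree :: "'a set \<Rightarrow> ('a \<Rightarrow> 'a \<Rightarrow> bool) \<Rightarrow> 'a \<Rightarrow> nat" where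
  "degree V adj x = card {y \<in> V. adj x y}"

definition leaves :: "'a set \<Rightarrow> ('a \<Rightarrow> 'a \<Rightarrow> bool) \<Rightarrow> 'a \<Rightarrow> 'a set" where
  "leaves V adj r = {x \<in> V. (x \<noteq> r \<and> degree V adj x = 1) \<or> (x = r \<and> V = {r})}"

definition basic :: "'a set \<Rightarrow> ('a \<Rightarrow> 'a \<Rightarrow> bool) \<Rightarrow> 'a \<Rightarrow> bool" where
  "basic P le x \<longleftrightarrow> x \<in> P \<and>
     \<not> (\<exists>u\<in>P. \<exists>v\<in>P. incomparable le u v \<and> lt le u x \<and> lt le v x) \<and>
     \<not> (\<exists>u\<in>P. \<exists>v\<in>P. incomparable le u v \<and> lt le x u \<and> lt le x v) \<and>
     \<not> (\<exists>u\<in>P. lt le u x \<and>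
          (\<forall>w\<in>P. w \<noteq> u \<and> w \<noteq> x \<longrightarrow>
              (le w u \<longleftrightarrow> le w x) \<and> (le u w \<longleftrightarrow> le x w)))"

definition minimal_elements :: "'a set \<Rightarrow> ('a \<Rightarrow> 'a \<Rightarrow> bool) \<Rightarrow> 'a set" where
  "minimal_elements S le = {x \<in> S. \<not> (\<exists>y\<in>S. lt le y x)}"

end

theory Submission
  imports Defs
begin

lemma poset_dual: "poset_on P le \<Longrightarrow> poset_on P (\<lambda>a b. le b a)"
  unfolding poset_on_def by blast

lemma lt_dual: "lt (\<lambda>a b. le b a) x y = lt le y x"
  unfolding lt_def by auto

lemma covers_dual: "covers P (\<lambda>a b. le b a) x y = covers P le y x"
  unfolding covers_def lt_def by auto

lemma hasse_dual: "hasse_adj P (\<lambda>a b. le b a) = hasse_adj P le"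
  unfolding hasse_adj_def covers_dual[of P le] by (intro ext) auto

lemma po_refl: "poset_on P le \<Longrightarrow> x \<in> P \<Longrightarrow> le x x"
  unfolding poset_on_def by blast
lemma po_antisym: "poset_on P le \<Longrightarrow> x \<in> P \<Longrightarrow> y \<in> P \<Longrightarrow> le x y \<Longrightarrow> le y x \<Longrightarrow> x = y"
  unfolding poset_on_def by blast
lemma po_trans: "poset_on P le \<Longrightarrow> x \<in> P \<Longrightarrow> y \<in> P \<Longrightarrow> z \<in> P \<Longrightarrow> le x y \<Longrightarrow> le y z \<Longrightarrow> le x z"
  unfolding poset_on_def by blast

lemma has_minimal:
  assumes "finite S" "S \<noteq> {}" "S \<subseteq> P" "poset_on P le"
  shows "\<exists>m\<in>S. \<forall>s\<in>S. le s m \<longrightarrow> s = m"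
  using assms
proof (induction S rule: finite_induct)
  case empty then show ?case by simp
next
  case (insert a S)
  show ?case
  proof (cases "S = {}")
    case True then show ?thesis by auto
  next
    case False
    then obtain m where m: "m \<in> S" "\<forall>s\<in>S. le s m \<longrightarrow> s = m" using insert by auto
    show ?thesis
    proof (cases "le a m")
      case True
      have "\<forall>s\<in>insert a S. le s a \<longrightarrow> s = a"
      proof (intro ballI impI)
        fix s assume s: "s \<in> insert a S" "le s a"
        show "s = a"
        proof (cases "s = a")
          case False
          then have "s \<in> S" using s by auto
          have "le s m" using po_trans[OF insert(6)] s `s\<in>S` True m(1) insert(5) by blast
          then have "s = m" using m `s\<in>S` by auto
          then show ?thesis using True s insert(5,6) m(1) po_antisym[OF insert(6), of a m] by auto
        qed simp
      qed
      then show ?thesis by blast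
    next
      case False
      then show ?thesis using m by auto
    qed
  qed
qed

lemma cover_above:
  assumes fin: "finite P" and po: "poset_on P le" and xP: "x \<in> P" and aP: "a \<in> P" and lt: "lt le x a"
  shows "\<exists>a'. covers P le x a' \<and> le a' a"
proof -
  let ?S = "{w\<in>P. lt le x w \<and> le w a}"
  have "a \<in> ?S" using aP lt po_refl[OF po] by auto
  then obtain m where m: "m \<in> ?S" "\<forall>s\<in>?S. le s m \<longrightarrow> s = m"
    using has_minimal[of ?S P le] fin po by auto
  have "covers P le x m"
    unfolding covers_def
  proof (intro conjI)
    show "\<not> (\<exists>z\<in>P. lt le x z \<and> lt le z m)"
    proof
      assume "\<exists>z\<in>P. lt le x z \<and> lt le z m"
      then obtain z where z: "z \<in> P" "lt le x z" "lt le z m" by blast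
      have "le z a" using z m(1) po_trans[OF po, of z m a] aP unfolding lt_def by auto
      then have "z = m" using m z by (auto simp: lt_def)
      then show False using z by (simp add: lt_def)
    qed
  qed (use xP m in auto)
  then show ?thesis using m by auto
qed

fun wk :: "('a \<Rightarrow> 'a \<Rightarrow> bool) \<Rightarrow> 'a list \<Rightarrow> bool" where
  "wk R [] = True"
| "wk R [x] = True"
| "wk R (x # y # xs) = (R x y \<and> wk R (y # xs))"

lemma wk_nth: "wk R xs \<Longrightarrow> Suc i < length xs \<Longrightarrow> R (xs!i) (xs!Suc i)"
proof (induction R xs arbitrary: i rule: wk.induct)
  case (3 R x y xs)
  then show ?case by (cases i) auto
qed auto

lemma wk_append: "wk R (xs @ ys) = (wk R xs \<and> wk R ys \<and> (xs \<noteq> [] \<longrightarrow> ys \<noteq> [] \<longrightarrow> R (last xs) (hd ys)))"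
proof (induction R xs rule: wk.induct)
  case (2 R x)
  then show ?case by (cases ys) auto
qed auto

lemma wk_rev: "wk R (rev xs) = wk (\<lambda>a b. R b a) xs"
proof (induction xs)
  case (Cons x xs)
  then show ?case by (cases xs) (auto simp: wk_append)
qed auto

lemma wk_mono: "wk R xs \<Longrightarrow> (\<And>a b. R a b \<Longrightarrow> S a b) \<Longrightarrow> wk S xs"
  by (induction R xs rule: wk.induct) auto

lemma wk_cycle:
  assumes "wk R cs" "length cs \<ge> 3" "distinct cs" "set cs \<subseteq> V" "R (last cs) (hd cs)"
  shows "has_cycle V R"
  unfolding has_cycle_def
proof (intro exI conjI allI impI)
  fix i assume i: "i < length cs"
  show "R (cs ! i) (cs ! ((i + 1) mod length cs))"
  proof (cases "Suc i < length cs")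
    case True then show ?thesis using wk_nth[OF assms(1)] by simp
  next
    case False
    then have "i = length cs - 1" using i by simp
    have ne: "cs \<noteq> []" using assms by auto
    have 1: "cs ! i = last cs" using ne `i = length cs - 1` by (simp add: last_conv_nth)
    have "(i + 1) mod length cs = 0" using `i = length cs - 1` ne by simp
    then have 2: "cs ! ((i + 1) mod length cs) = hd cs" using ne by (simp add: hd_conv_nth)
    show ?thesis unfolding 1 2 by (rule assms(5))
  qed
qed (use assms in auto)

lemma chain_exists:
  assumes fin: "finite P" and po: "poset_on P le" and zP: "z \<in> P"
  shows "y \<in> P \<Longrightarrow> le y z \<Longrightarrow> \<exists>cs. cs \<noteq> [] \<and> hd cs = y \<and> last cs = z \<and>
           set cs \<subseteq> {w\<in>P. le y w \<and> le w z} \<and> distinct cs \<and> wk (covers P le) cs"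
proof (induction "card {w\<in>P. le y w \<and> le w z}" arbitrary: y rule: less_induct)
  case less
  note y = less.prems
  show ?case
  proof (cases "y = z")
    case True
    then show ?thesis using y po_refl[OF po] by (intro exI[of _ "[y]"]) auto
  next
    case False
    then have "lt le y z" by (simp add: lt_def y)
    then obtain y' where c: "covers P le y y'" "le y' z"
      using cover_above[OF fin po y(1) zP] by blast
    have y'P: "y' \<in> P" and lyy': "lt le y y'" using c unfolding covers_def by auto
    have ynot: "y \<notin> {w\<in>P. le y' w \<and> le w z}"
        using po_antisym[OF po, of y y'] y y'P lyy' unfolding lt_def by blast
    have sub: "{w\<in>P. le y' w \<and> le w z} \<subset> {w\<in>P. le y w \<and> le w z}"
    proof
      show "{w\<in>P. le y' w \<and> le w z} \<subseteq> {w\<in>P. le y w \<and> le w z}"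
        using po_trans[OF po, of y y'] y y'P lyy' unfolding lt_def by blast
      have "y \<notin> {w\<in>P. le y' w \<and> le w z}"
        using po_antisym[OF po, of y y'] y y'P lyy' unfolding lt_def by blast
      moreover have "y \<in> {w\<in>P. le y w \<and> le w z}" using y po_refl[OF po] by auto
      ultimately show "{w\<in>P. le y' w \<and> le w z} \<noteq> {w\<in>P. le y w \<and> le w z}" by blast
    qed
    have "card {w\<in>P. le y' w \<and> le w z} < card {w\<in>P. le y w \<and> le w z}"
      using psubset_card_mono[OF _ sub] fin by auto
    from less.hyps[OF this y'P c(2)] obtain cs where cs: "cs \<noteq> []" "hd cs = y'" "last cs = z"
      "set cs \<subseteq> {w\<in>P. le y' w \<and> le w z}" "distinct cs" "wk (covers P le) cs" by blast
    obtain cs' where cs': "cs = y' # cs'" using cs(1,2) by (cases cs) auto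
    have "set (y # cs) \<subseteq> {w\<in>P. le y w \<and> le w z}" using cs(4) sub y po_refl[OF po] by auto
    moreover have "y \<notin> set cs" using cs(4) ynot by auto
    moreover have "wk (covers P le) (y # cs)" using cs(6) c(1) cs' by simp
    ultimately show ?thesis using cs by (intro exI[of _ "y # cs"]) auto
  qed
qed

lemma unique_upper_cover:
  assumes fin: "finite P" and po: "poset_on P le" and nc: "\<not> has_cycle P (hasse_adj P le)"
    and ca: "covers P le x a" and cb: "covers P le x b" and tP: "t \<in> P" and at: "le a t" and bt: "le b t"
  shows "a = b"
proof (rule ccontr)
  assume ab: "a \<noteq> b"
  have xP: "x \<in> P" and aP: "a \<in> P" and bP: "b \<in> P" and xa: "lt le x a" and xb: "lt le x b"
    using ca cb unfolding covers_def by auto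
  have nab: "\<not> le a b"
  proof
    assume "le a b" then have "lt le a b" using ab by (simp add: lt_def)
    then show False using cb xa aP unfolding covers_def by blast
  qed
  have nba: "\<not> le b a"
  proof
    assume "le b a" then have "lt le b a" using ab by (simp add: lt_def)
    then show False using ca xb bP unfolding covers_def by blast
  qed
  let ?U = "{w\<in>P. le a w \<and> le b w}"
  have "t \<in> ?U" using tP at bt by auto
  then obtain c where c: "c \<in> ?U" "\<forall>s\<in>?U. le s c \<longrightarrow> s = c"
    using has_minimal[of ?U P le] fin po by auto
  have cP: "c \<in> P" using c by auto
  have ac: "a \<noteq> c" using c nba by auto
  have bc: "b \<noteq> c" using c nab by auto
  obtain p where p: "p \<noteq> []" "hd p = a" "last p = c"
      "set p \<subseteq> {w\<in>P. le a w \<and> le w c}" "distinct p" "wk (covers P le) p"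
    using chain_exists[OF fin po cP aP] c by auto
  obtain q where q: "q \<noteq> []" "hd q = b" "last q = c"
      "set q \<subseteq> {w\<in>P. le b w \<and> le w c}" "distinct q" "wk (covers P le) q"
    using chain_exists[OF fin po cP bP] c by auto
  define q' where "q' = butlast q"
  have qq: "q = q' @ [c]" using append_butlast_last_id[OF q(1)] q(3) unfolding q'_def by simp
  have q'ne: "q' \<noteq> []" using qq q(2) bc by (cases q') auto
  have hq': "hd q' = b" using qq q(2) q'ne by (cases q') auto
  have cq': "c \<notin> set q'" using q(5) qq by auto
  have dq': "distinct q'" using q(5) qq by auto
  have wq': "wk (covers P le) q'" and lastq': "covers P le (last q') c"
    using q(6) q'ne unfolding qq wk_append by auto
  have lp: "length p \<ge> 2"
  proof (rule ccontr)
    assume "\<not> length p \<ge> 2"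
    then have "length p = 1" using p(1) by (cases p) (auto simp: not_less_eq_eq)
    then obtain a0 where "p = [a0]" by (auto simp: length_Suc_conv)
    then show False using p(2,3) ac by simp
  qed
  define cs where "cs = x # p @ rev q'"
  have "has_cycle P (hasse_adj P le)"
  proof (rule wk_cycle[of "hasse_adj P le" cs])
    have w1: "wk (hasse_adj P le) (x # p)"
    proof -
      obtain p' where "p = a # p'" using p(1,2) by (cases p) auto
      then show ?thesis using ca wk_mono[OF p(6), of "hasse_adj P le"] unfolding hasse_adj_def by auto
    qed
    have w2: "wk (hasse_adj P le) (rev q')"
      unfolding wk_rev using wk_mono[OF wq', of "\<lambda>a b. hasse_adj P le b a"] unfolding hasse_adj_def by auto
    have j: "hasse_adj P le (last p) (hd (rev q'))"
      using lastq' p(3) q'ne unfolding hasse_adj_def by (simp add: hd_rev)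
    show "wk (hasse_adj P le) cs" unfolding cs_def
      using w1 w2 j p(1) q'ne wk_append[of "hasse_adj P le" "x # p" "rev q'"] by simp
    show "length cs \<ge> 3" unfolding cs_def using lp q'ne by (cases q') auto
    have xp: "x \<notin> set p" using p(4) xa po_antisym[OF po, of x a] xP aP unfolding lt_def by auto
    have xq: "x \<notin> set q'" using q(4) qq xb po_antisym[OF po, of x b] xP bP unfolding lt_def by auto
    have pq: "set p \<inter> set q' = {}"
    proof (rule ccontr)
      assume "set p \<inter> set q' \<noteq> {}"
      then obtain w where w: "w \<in> set p" "w \<in> set q'" by blast
      then have "w \<in> ?U" "le w c" using p(4) q(4) qq by auto
      then have "w = c" using c by auto
      then show False using w cq' by simp
    qed
    show "distinct cs" unfolding cs_def using xp xq pq p(5) dq' by auto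
    show "set cs \<subseteq> P" unfolding cs_def using xP p(4) q(4) qq by auto
    show "hasse_adj P le (last cs) (hd cs)" unfolding cs_def
      using cb hq' q'ne unfolding hasse_adj_def by (simp add: last_rev)
  qed
  then show False using nc by simp
qed

lemma upset_chain:
  assumes fin: "finite P" and po: "poset_on P le" and nc: "\<not> has_cycle P (hasse_adj P le)"
    and rP: "r \<in> P" and top: "\<forall>x\<in>P. le x r"
  shows "x \<in> P \<Longrightarrow> a \<in> P \<Longrightarrow> b \<in> P \<Longrightarrow> le x a \<Longrightarrow> le x b \<Longrightarrow> le a b \<or> le b a"
proof (induction "card {w\<in>P. le x w}" arbitrary: x rule: less_induct)
  case less
  note xP = less.prems(1) and aP = less.prems(2) and bP = less.prems(3)
  show ?case
  proof (cases "x = a \<or> x = b")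
    case True then show ?thesis using less.prems by auto
  next
    case False
    then have "lt le x a" "lt le x b" using less.prems by (auto simp: lt_def)
    obtain a' where a': "covers P le x a'" "le a' a" using cover_above[OF fin po xP aP `lt le x a`] by blast
    obtain b' where b': "covers P le x b'" "le b' b" using cover_above[OF fin po xP bP `lt le x b`] by blast
    have a'P: "a' \<in> P" and xa': "lt le x a'" using a' unfolding covers_def by auto
    have b'P: "b' \<in> P" using b' unfolding covers_def by auto
    have "a' = b'" using unique_upper_cover[OF fin po nc a'(1) b'(1) rP] top a'P b'P by auto
    have xn: "x \<notin> {w\<in>P. le a' w}" using po_antisym[OF po, of x a'] xP a'P xa' unfolding lt_def by auto
    have sub: "{w\<in>P. le a' w} \<subset> {w\<in>P. le x w}"
      using po_trans[OF po, of x a'] xP a'P xa' xn po_refl[OF po, of x] unfolding lt_def by blast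
    have "card {w\<in>P. le a' w} < card {w\<in>P. le x w}"
      using psubset_card_mono[OF _ sub] fin by auto
    from less.hyps[OF this a'P aP bP a'(2)] show ?thesis using b'(2) `a' = b'` by simp
  qed
qed

lemma leaves_top:
  assumes fin: "finite P" and po: "poset_on P le" and nc: "\<not> has_cycle P (hasse_adj P le)"
    and rP: "r \<in> P" and top: "\<forall>x\<in>P. le x r"
  shows "leaves P (hasse_adj P le) r = minimal_elements P le"
proof -
  have deg: "degree P (hasse_adj P le) x = 1 \<longleftrightarrow> x \<in> minimal_elements P le"
    if xP: "x \<in> P" and xr: "x \<noteq> r" for x
  proof -
    let ?N = "{y\<in>P. hasse_adj P le x y}"
    have "lt le x r" using top xP xr by (simp add: lt_def)
    then obtain u where u: "covers P le x u" using cover_above[OF fin po xP rP] by blast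
    have uP: "u \<in> P" and xu: "lt le x u" using u unfolding covers_def by auto
    have uniq: "y = u" if cy: "covers P le x y" for y
    proof -
      have "y \<in> P" using cy unfolding covers_def by blast
      then show ?thesis using unique_upper_cover[OF fin po nc cy u rP] top uP by blast
    qed
    have uN: "u \<in> ?N" using u uP unfolding hasse_adj_def by auto
    show ?thesis
    proof
      assume "degree P (hasse_adj P le) x = 1"
      then have c1: "card ?N = 1" unfolding degree_def .
      show "x \<in> minimal_elements P le"
      proof (rule ccontr)
        assume "x \<notin> minimal_elements P le"
        then obtain y where yP: "y \<in> P" and yx: "lt le y x" using xP unfolding minimal_elements_def by auto
        have "lt (\<lambda>a b. le b a) x y" using yx by (simp add: lt_dual[of le])
        then obtain d where d: "covers P (\<lambda>a b. le b a) x d"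
          using cover_above[OF fin poset_dual[OF po] xP yP] by blast
        then have d': "covers P le d x" by (simp add: covers_dual[of P le])
        have dP: "d \<in> P" and dx: "lt le d x" using d' unfolding covers_def by auto
        have dN: "d \<in> ?N" using d' dP unfolding hasse_adj_def by auto
        have "d \<noteq> u" using dx xu po_antisym[OF po, of d x] dP xP unfolding lt_def by auto
        then have "card {d, u} \<le> card ?N" using dN uN fin by (intro card_mono) auto
        then show False using c1 `d \<noteq> u` by simp
      qed
    next
      assume m: "x \<in> minimal_elements P le"
      have "?N = {u}"
      proof (intro equalityI subsetI)
        fix y assume "y \<in> ?N"
        then have "covers P le x y \<or> covers P le y x" "y \<in> P" unfolding hasse_adj_def by auto
        then consider "covers P le x y" | "covers P le y x" by blast
        then show "y \<in> {u}"
        proof cases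
          case 1 then show ?thesis using uniq by blast
        next
          case 2
          then have "y \<in> P" "lt le y x" unfolding covers_def by blast+
          then show ?thesis using m unfolding minimal_elements_def by blast
        qed
      qed (use uN in auto)
      then show "degree P (hasse_adj P le) x = 1" unfolding degree_def by simp
    qed
  qed
  have rmin: "r \<in> minimal_elements P le \<longleftrightarrow> P = {r}"
  proof
    assume m: "r \<in> minimal_elements P le"
    have "y = r" if yP: "y \<in> P" for y
    proof (rule ccontr)
      assume "y \<noteq> r"
      then have "lt le y r" using top yP unfolding lt_def by blast
      then show False using m yP unfolding minimal_elements_def by blast
    qed
    then show "P = {r}" using rP by blast
  next
    assume "P = {r}"
    then show "r \<in> minimal_elements P le" unfolding minimal_elements_def lt_def by blast
  qed
  show ?thesis
  proof (intro equalityI subsetI)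
    fix x assume x: "x \<in> leaves P (hasse_adj P le) r"
    then have xP: "x \<in> P" and xl: "(x \<noteq> r \<and> degree P (hasse_adj P le) x = 1) \<or> (x = r \<and> P = {r})"
      unfolding leaves_def by auto
    show "x \<in> minimal_elements P le"
    proof (cases "x = r")
      case True then show ?thesis using xl rmin by blast
    next
      case False then show ?thesis using xl deg[OF xP False] by blast
    qed
  next
    fix x assume x: "x \<in> minimal_elements P le"
    then have xP: "x \<in> P" unfolding minimal_elements_def by auto
    show "x \<in> leaves P (hasse_adj P le) r"
    proof (cases "x = r")
      case True then show ?thesis using x rmin xP unfolding leaves_def by blast
    next
      case False then show ?thesis using x deg[OF xP False] xP unfolding leaves_def by blast
    qed
  qed
qed

lemma has_max_below:
  assumes fin: "finite P" and po: "poset_on P le" and yP: "y \<in> P" and yx: "lt le y x"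
  shows "\<exists>c\<in>P. lt le c x \<and> (\<forall>s\<in>P. lt le s x \<longrightarrow> le c s \<longrightarrow> s = c)"
proof -
  let ?S = "{w\<in>P. lt le w x}"
  have "y \<in> ?S" using yP yx by auto
  then obtain c where "c \<in> ?S" "\<forall>s\<in>?S. le c s \<longrightarrow> s = c"
    using has_minimal[of ?S P "\<lambda>a b. le b a"] fin poset_dual[OF po] by auto
  then show ?thesis by auto
qed

lemma basic_not_minimal:
  assumes fin: "finite P" and po: "poset_on P le" and xP: "x \<in> P" and bx: "basic P le x"
    and yP: "y \<in> P" and yx: "lt le y x"
    and key: "\<And>c w. c \<in> P \<Longrightarrow> w \<in> P \<Longrightarrow> lt le c x \<Longrightarrow> le y c \<Longrightarrow> lt le c w \<Longrightarrow> le x w \<or> le w x"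
  shows False
proof -
  obtain c where cP: "c \<in> P" and cx: "lt le c x" and cmax: "\<forall>s\<in>P. lt le s x \<longrightarrow> le c s \<longrightarrow> s = c"
    using has_max_below[OF fin po yP yx] by blast
  have B1: "\<not> incomparable le u v" if "u \<in> P" "v \<in> P" "lt le u x" "lt le v x" for u v
    using bx that unfolding basic_def by blast
  have yc: "le y c"
  proof -
    have "le y c \<or> le c y" using B1[OF yP cP yx cx] unfolding incomparable_def by blast
    then show ?thesis using cmax yP yx po_refl[OF po yP] by auto
  qed
  have "\<forall>w\<in>P. w \<noteq> c \<and> w \<noteq> x \<longrightarrow> (le w c \<longleftrightarrow> le w x) \<and> (le c w \<longleftrightarrow> le x w)"
  proof (intro ballI impI conjI iffI)
    fix w assume wP: "w \<in> P" and w: "w \<noteq> c \<and> w \<noteq> x"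
    show "le w x" if "le w c" using that po_trans[OF po wP cP xP] cx unfolding lt_def by auto
    show "le c w" if "le x w" using that po_trans[OF po cP xP wP] cx unfolding lt_def by auto
    show "le w c" if "le w x"
    proof -
      have wx: "lt le w x" using that w by (simp add: lt_def)
      have "le w c \<or> le c w" using B1[OF wP cP wx cx] unfolding incomparable_def by blast
      then show ?thesis using cmax wP wx w by auto
    qed
    show "le x w" if "le c w"
    proof -
      have "lt le c w" using that w by (auto simp: lt_def)
      then have "le x w \<or> le w x" using key[OF cP wP cx yc] by blast
      moreover have "\<not> le w x"
      proof
        assume "le w x"
        then have "lt le w x" using w by (simp add: lt_def)
        then show False using cmax wP `le c w` w by auto
      qed
      ultimately show ?thesis by blast
    qed
  qed
  then show False using bx cP cx unfolding basic_def by blast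
qed

lemma basic_top:
  assumes fin: "finite P" and po: "poset_on P le" and nc: "\<not> has_cycle P (hasse_adj P le)"
    and rP: "r \<in> P" and top: "\<forall>x\<in>P. le x r"
  shows "{x\<in>P. basic P le x} = minimal_elements P le"
proof (intro equalityI subsetI)
  fix x assume "x \<in> {x\<in>P. basic P le x}"
  then have xP: "x \<in> P" and bx: "basic P le x" by auto
  show "x \<in> minimal_elements P le"
  proof (rule ccontr)
    assume "x \<notin> minimal_elements P le"
    then obtain y where yP: "y \<in> P" and yx: "lt le y x" using xP unfolding minimal_elements_def by auto
    show False
    proof (rule basic_not_minimal[OF fin po xP bx yP yx])
      fix c w assume "c \<in> P" "w \<in> P" "lt le c x" "le y c" "lt le c w"
      then show "le x w \<or> le w x"
        using upset_chain[OF fin po nc rP top, of c x w] xP unfolding lt_def by auto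
    qed
  qed
next
  fix x assume m: "x \<in> minimal_elements P le"
  then have xP: "x \<in> P" unfolding minimal_elements_def by auto
  have "\<not> (\<exists>u\<in>P. \<exists>v\<in>P. incomparable le u v \<and> lt le x u \<and> lt le x v)"
    using upset_chain[OF fin po nc rP top, of x] xP unfolding incomparable_def lt_def by blast
  then show "x \<in> {x\<in>P. basic P le x}" using m xP unfolding minimal_elements_def basic_def by blast
qed

lemma basic_bottom:
  assumes fin: "finite P" and po: "poset_on P le" and nc: "\<not> has_cycle P (hasse_adj P le)"
    and rP: "r \<in> P" and bot: "\<forall>x\<in>P. le r x"
  shows "{x\<in>P. basic P le x} =
     minimal_elements {x \<in> P. \<exists>!l. l \<in> leaves P (hasse_adj P le) r \<and> le x l} le"
proof -
  let ?d = "\<lambda>a b. le b a"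
  have pod: "poset_on P ?d" using poset_dual[OF po] .
  have ncd: "\<not> has_cycle P (hasse_adj P ?d)" using nc by (simp add: hasse_dual[of P le])
  have dchain: "le a b \<or> le b a" if "x \<in> P" "a \<in> P" "b \<in> P" "le a x" "le b x" for x a b
    using upset_chain[OF fin pod ncd rP, of x a b] bot that by auto
  have lv: "leaves P (hasse_adj P le) r = minimal_elements P ?d"
    using leaves_top[OF fin pod ncd rP] bot by (simp add: hasse_dual[of P le])
  define M where "M = minimal_elements P ?d"
  have M: "l \<in> M \<longleftrightarrow> l \<in> P \<and> \<not> (\<exists>y\<in>P. le l y \<and> y \<noteq> l)" for l
    unfolding M_def minimal_elements_def lt_def by auto
  have ex: "\<exists>l. l \<in> M \<and> le x l" if xP: "x \<in> P" for x
  proof -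
    let ?S = "{w\<in>P. le x w}"
    have "x \<in> ?S" using xP po_refl[OF po] by auto
    then obtain l where l: "l \<in> ?S" "\<forall>s\<in>?S. le l s \<longrightarrow> s = l"
      using has_minimal[of ?S P ?d] fin pod by auto
    have "l \<in> M" unfolding M using l po_trans[OF po, of x l] xP by auto
    then show ?thesis using l by auto
  qed
  define NI where "NI x = (\<not> (\<exists>u\<in>P. \<exists>v\<in>P. incomparable le u v \<and> lt le x u \<and> lt le x v))" for x
  have K: "(\<exists>!l. l \<in> M \<and> le x l) \<longleftrightarrow> NI x" if xP: "x \<in> P" for x
  proof
    assume u: "\<exists>!l. l \<in> M \<and> le x l"
    show "NI x" unfolding NI_def
    proof
      assume "\<exists>u\<in>P. \<exists>v\<in>P. incomparable le u v \<and> lt le x u \<and> lt le x v"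
      then obtain u v where uP: "u \<in> P" and vP: "v \<in> P" and inc: "incomparable le u v"
        and xu: "lt le x u" and xv: "lt le x v" by blast
      obtain l1 where l1: "l1 \<in> M" "le u l1" using ex[OF uP] by blast
      obtain l2 where l2: "l2 \<in> M" "le v l2" using ex[OF vP] by blast
      have "le x l1" "le x l2" using l1 l2 xu xv po_trans[OF po] xP uP vP M unfolding lt_def by metis+
      then have "l1 = l2" using u l1 l2 by auto
      then show False using dchain[of l1 u v] l1 l2 uP vP inc M unfolding incomparable_def by auto
    qed
  next
    assume ni: "NI x"
    obtain l where l: "l \<in> M" "le x l" using ex[OF xP] by blast
    show "\<exists>!l. l \<in> M \<and> le x l"
    proof (intro ex1I)
      show "l \<in> M \<and> le x l" using l by auto
      fix l' assume l': "l' \<in> M \<and> le x l'"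
      show "l' = l"
      proof (rule ccontr)
        assume ne: "l' \<noteq> l"
        have "\<not> le l l'" "\<not> le l' l" using l l' ne M by auto
        moreover have "x \<noteq> l" "x \<noteq> l'" using l l' calculation by auto
        ultimately show False using ni l l' M unfolding NI_def incomparable_def lt_def by blast
      qed
    qed
  qed
  have P1: "{x \<in> P. \<exists>!l. l \<in> leaves P (hasse_adj P le) r \<and> le x l} = {x\<in>P. NI x}"
    unfolding lv M_def[symmetric] by (intro Collect_cong) (use K in blast)
  show ?thesis unfolding P1
  proof (intro equalityI subsetI)
    fix x assume "x \<in> {x\<in>P. basic P le x}"
    then have xP: "x \<in> P" and bx: "basic P le x" by auto
    have nix: "NI x" using bx unfolding basic_def NI_def by blast
    show "x \<in> minimal_elements {x\<in>P. NI x} le"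
    proof (rule ccontr)
      assume "x \<notin> minimal_elements {x\<in>P. NI x} le"
      then obtain y where yP: "y \<in> P" and niy: "NI y" and yx: "lt le y x"
        using xP nix unfolding minimal_elements_def by auto
      show False
      proof (rule basic_not_minimal[OF fin po xP bx yP yx])
        fix c w assume cP: "c \<in> P" and wP: "w \<in> P" and cx: "lt le c x" and yc: "le y c" and cw: "lt le c w"
        have yw: "le y w" using po_trans[OF po yP cP wP] yc cw unfolding lt_def by auto
        have "y \<noteq> w" using yc cw po_antisym[OF po cP wP] unfolding lt_def by auto
        then have "lt le y w" "lt le y x" using yw yx by (auto simp: lt_def)
        then have "\<not> incomparable le w x" using niy wP xP unfolding NI_def by blast
        then show "le x w \<or> le w x" unfolding incomparable_def by blast
      qed
    qed
  next
    fix x assume m: "x \<in> minimal_elements {x\<in>P. NI x} le"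
    then have xP: "x \<in> P" and nix: "NI x" and mn: "\<not> (\<exists>y\<in>P. NI y \<and> lt le y x)"
      unfolding minimal_elements_def by auto
    have B1: "\<not> (\<exists>u\<in>P. \<exists>v\<in>P. incomparable le u v \<and> lt le u x \<and> lt le v x)"
      using dchain[OF xP] unfolding incomparable_def lt_def by blast
    have B3: "\<not> (\<exists>u\<in>P. lt le u x \<and>
          (\<forall>w\<in>P. w \<noteq> u \<and> w \<noteq> x \<longrightarrow> (le w u \<longleftrightarrow> le w x) \<and> (le u w \<longleftrightarrow> le x w)))"
    proof
      assume "\<exists>u\<in>P. lt le u x \<and>
          (\<forall>w\<in>P. w \<noteq> u \<and> w \<noteq> x \<longrightarrow> (le w u \<longleftrightarrow> le w x) \<and> (le u w \<longleftrightarrow> le x w))"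
      then obtain u where uP: "u \<in> P" and ux: "lt le u x" and pr:
        "\<forall>w\<in>P. w \<noteq> u \<and> w \<noteq> x \<longrightarrow> (le w u \<longleftrightarrow> le w x) \<and> (le u w \<longleftrightarrow> le x w)" by blast
      have "\<not> NI u" using mn uP ux by auto
      then obtain v1 v2 where v1P: "v1 \<in> P" and v2P: "v2 \<in> P" and inc: "incomparable le v1 v2"
        and uv1: "lt le u v1" and uv2: "lt le u v2" unfolding NI_def by blast
      have xv1: "le x v1" using pr v1P uv1 po_refl[OF po xP] unfolding lt_def by (cases "v1 = x") auto
      have xv2: "le x v2" using pr v2P uv2 po_refl[OF po xP] unfolding lt_def by (cases "v2 = x") auto
      have "v1 \<noteq> x" "v2 \<noteq> x" using inc xv1 xv2 unfolding incomparable_def by auto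
      then show False using nix v1P v2P inc xv1 xv2 unfolding NI_def lt_def by blast
    qed
    show "x \<in> {x\<in>P. basic P le x}" using xP B1 B3 nix unfolding basic_def NI_def by blast
  qed
qed

theorem proposition3p8:
  fixes P :: "'a set" and le :: "'a \<Rightarrow> 'a \<Rightarrow> bool" and r :: 'a
  assumes "finite P"
    and "poset_on P le"
    and "is_tree P (hasse_adj P le)"
    and "r \<in> P"
  shows "((\<forall>x\<in>P. le x r) \<longrightarrow>
            {x \<in> P. basic P le x} = leaves P (hasse_adj P le) r \<and>
            leaves P (hasse_adj P le) r = minimal_elements P le)
       \<and> ((\<forall>x\<in>P. le r x) \<longrightarrow>
            {x \<in> P. basic P le x} =
              minimal_elements {x \<in> P. \<exists>!l. l \<in> leaves P (hasse_adj P le) r \<and> le x l} le)"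
proof -
  have nc: "\<not> has_cycle P (hasse_adj P le)" using assms(3) unfolding is_tree_def by auto
  show ?thesis
    using basic_top[OF assms(1,2) nc assms(4)] leaves_top[OF assms(1,2) nc assms(4)]
      basic_bottom[OF assms(1,2) nc assms(4)] by auto
qed

end
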